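(* Let $(X,d)$ be a separable geodesic Gromov-hyperbolic space with basepoint $o$, and $\mu$ a countably supported non-elementary probability measure on $\mathrm{Isom}(X)$ with finite exponential moment. Let $v(\mu)=\sup_{\xi\in\overline X^h}\mathbb E[(\sigma_0(X_1,\xi)-\ell_\mu)^2]$. For every $\epsilon>0$ there exists $b>0$ such that for every $|\lambda|<b$, every $n\in\mathbb N$ and every $x\in\overline X^h$, almost surely $$\mathbb E\big[\exp(\lambda\Delta_nM_x)\mid\mathcal F_{n-1}\big]\le\exp\Big(\frac{\lambda^2(v(\mu)+\epsilon)}{2}\Big).$$
   Context: Gromov-hyperbolic: $\exists\delta\ge0$, $(x|y)_o\ge\min\{(x|z)_o,(z|y)_o\}-\delta$ with $(x|y)_o=\frac12(d(x,o)+d(y,o)-d(x,y))$; non-elementary: the semigroup generated by $\mathrm{supp}\,\mu$ contains two loxodromic isometries with disjoint fixed point pairs on the Gromov boundary; $\kappa(g)=d(g\cdot o,o)$, finite exponential moment: $\int e^{\alpha\kappa}d\mu<\infty$ for some $\alpha>0$. $\overline X^h$ is the horofunction compactification (closure of $\{h_x:m\mapsto d(x,m)-d(x,o)\}$ among 1-Lipschitz functions vanishing at $o$, pointwise convergence), action $(g\cdot h)(m)=h(g^{-1}m)-h(g^{-1}o)$, Busemann cocycle $\sigma(g,h)=h(g^{-1}o)$. $X_i$ i.i.d. with law $\mu$, $L_n=X_n\cdots X_1$, $\mathcal F_n=\sigma(X_1,\dots,X_n)$, $\ell_\mu=\lim\kappa(L_n)/n$ a.s. $\sigma_0(g,x):=\sigma(g,x)+\psi(g\cdot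 x)-\psi(x)$ for a fixed bounded measurable $\psi$ (known to exist) with $\int\sigma_0(g,x)d\mu(g)=\ell_\mu$ for all $x$. $M_{x,n}=\sigma_0(L_n,x)-n\ell_\mu$ and $\Delta_nM_x=M_{x,n}-M_{x,n-1}=\sigma_0(X_n,L_{n-1}\cdot x)-\ell_\mu$. *)

theory Defs
  imports "HOL-Analysis.Analysis" "HOL-Probability.Probability"
begin

definition separable_space :: "'a::metric_space itself \<Rightarrow> bool" where
  "separable_space _ \<longleftrightarrow> (\<exists>D::'a set. countable D \<and> closure D = UNIV)"

definition geodesic_space :: "'a::metric_space itself \<Rightarrow> bool" where
  "geodesic_space _ \<longleftrightarrow> (\<forall>x y::'a. \<exists>\<gamma>::real \<Rightarrow> 'a.
      \<gamma> 0 = x \<and> \<gamma> (dist x y) = y \<and>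
      (\<forall>s\<in>{0..dist x y}. \<forall>t\<in>{0..dist x y}. dist (\<gamma> s) (\<gamma> t) = \<bar>s - t\<bar>))"

definition gprod :: "'a::metric_space \<Rightarrow> 'a \<Rightarrow> 'a \<Rightarrow> real" where
  "gprod o' x y = (dist x o' + dist y o' - dist x y) / 2"

definition gromov_hyperbolic :: "'a::metric_space \<Rightarrow> bool" where
  "gromov_hyperbolic o' \<longleftrightarrow> (\<exists>\<delta>\<ge>0. \<forall>x y z.
      gprod o' x y \<ge> min (gprod o' x z) (gprod o' z y) - \<delta>)"

definition isometry :: "('a::metric_space \<Rightarrow> 'a) \<Rightarrow> bool" where
  "isometry g \<longleftrightarrow> bij g \<and> (\<forall>x y. dist (g x) (g y) = dist x y)"

definition conv_infty :: "'a::metric_space \<Rightarrow> (nat \<Rightarrow> 'a) \<Rightarrow> bool" where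
  "conv_infty o' s \<longleftrightarrow> (\<forall>K. \<exists>N. \<forall>i\<ge>N. \<forall>j\<ge>N. gprod o' (s i) (s j) \<ge> K)"

definition bdry_equiv :: "'a::metric_space \<Rightarrow> (nat \<Rightarrow> 'a) \<Rightarrow> (nat \<Rightarrow> 'a) \<Rightarrow> bool" where
  "bdry_equiv o' s t \<longleftrightarrow> (\<forall>K. \<exists>N. \<forall>i\<ge>N. \<forall>j\<ge>N. gprod o' (s i) (t j) \<ge> K)"

definition bpt :: "'a::metric_space \<Rightarrow> (nat \<Rightarrow> 'a) \<Rightarrow> (nat \<Rightarrow> 'a) set" where
  "bpt o' s = {t. conv_infty o' t \<and> bdry_equiv o' s t}"

definition gromov_boundary :: "'a::metric_space \<Rightarrow> (nat \<Rightarrow> 'a) set set" where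
  "gromov_boundary o' = bpt o' ` {s. conv_infty o' s}"

definition loxodromic :: "'a::metric_space \<Rightarrow> ('a \<Rightarrow> 'a) \<Rightarrow> bool" where
  "loxodromic o' g \<longleftrightarrow> isometry g \<and>
     (\<exists>L>0. (\<lambda>n. dist ((g ^^ n) o') o' / real n) \<longlonglongrightarrow> L)"

definition fix_plus :: "'a::metric_space \<Rightarrow> ('a \<Rightarrow> 'a) \<Rightarrow> (nat \<Rightarrow> 'a) set" where
  "fix_plus o' g = bpt o' (\<lambda>n. (g ^^ n) o')"

definition fix_minus :: "'a::metric_space \<Rightarrow> ('a \<Rightarrow> 'a) \<Rightarrow> (nat \<Rightarrow> 'a) set" where
  "fix_minus o' g = bpt o' (\<lambda>n. (inv g ^^ n) o')"

inductive_set semigroup_gen :: "('a \<Rightarrow> 'a) set \<Rightarrow> ('a \<Rightarrow> 'a) set" for S where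
  base: "g \<in> S \<Longrightarrow> g \<in> semigroup_gen S"
| comp: "g \<in> semigroup_gen S \<Longrightarrow> h \<in> semigroup_gen S \<Longrightarrow> g \<circ> h \<in> semigroup_gen S"

definition non_elementary :: "'a::metric_space \<Rightarrow> ('a \<Rightarrow> 'a) pmf \<Rightarrow> bool" where
  "non_elementary o' \<mu> \<longleftrightarrow> (\<exists>g\<in>semigroup_gen (set_pmf \<mu>). \<exists>h\<in>semigroup_gen (set_pmf \<mu>).
      loxodromic o' g \<and> loxodromic o' h \<and>
      {fix_plus o' g, fix_minus o' g} \<inter> {fix_plus o' h, fix_minus o' h} = {})"

definition finite_exp_moment :: "'a::metric_space \<Rightarrow> ('a \<Rightarrow> 'a) pmf \<Rightarrow> bool" where
  "finite_exp_moment o' \<mu> \<longleftrightarrow>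
     (\<exists>\<alpha>>0. integrable (measure_pmf \<mu>) (\<lambda>g. exp (\<alpha> * dist (g o') o')))"

text \<open>Closure in the product (pointwise convergence) topology on 'a \<Rightarrow> real.\<close>
definition horo_cpt :: "'a::metric_space \<Rightarrow> ('a \<Rightarrow> real) set" where
  "horo_cpt o' = closure (range (\<lambda>x m. dist x m - dist x o'))"

definition horo_act :: "'a::metric_space \<Rightarrow> ('a \<Rightarrow> 'a) \<Rightarrow> ('a \<Rightarrow> real) \<Rightarrow> ('a \<Rightarrow> real)" where
  "horo_act o' g h = (\<lambda>m. h (inv g m) - h (inv g o'))"

definition busemann :: "'a::metric_space \<Rightarrow> ('a \<Rightarrow> 'a) \<Rightarrow> ('a \<Rightarrow> real) \<Rightarrow> real" where
  "busemann o' g h = h (inv g o')"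

definition sigma0 :: "'a::metric_space \<Rightarrow> (('a \<Rightarrow> real) \<Rightarrow> real) \<Rightarrow> ('a \<Rightarrow> 'a) \<Rightarrow> ('a \<Rightarrow> real) \<Rightarrow> real" where
  "sigma0 o' \<psi> g h = busemann o' g h + \<psi> (horo_act o' g h) - \<psi> h"

definition step_space :: "('a \<Rightarrow> 'a) pmf \<Rightarrow> ('a \<Rightarrow> 'a) measure" where
  "step_space \<mu> = restrict_space (measure_pmf \<mu>) (set_pmf \<mu>)"

text \<open>Sample space: sequences \<omega>, with X_n = \<omega> n for n \<ge> 1 (\<omega> 0 is unused).\<close>
definition walk_space :: "('a \<Rightarrow> 'a) pmf \<Rightarrow> (nat \<Rightarrow> 'a \<Rightarrow> 'a) measure" where
  "walk_space \<mu> = PiM UNIV (\<lambda>_. step_space \<mu>)"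

primrec walk :: "nat \<Rightarrow> (nat \<Rightarrow> 'a \<Rightarrow> 'a) \<Rightarrow> ('a \<Rightarrow> 'a)" where
  "walk 0 \<omega> = id"
| "walk (Suc n) \<omega> = \<omega> (Suc n) \<circ> walk n \<omega>"

text \<open>F_n = sigma(X_1,...,X_n).\<close>
definition walk_filtration :: "('a \<Rightarrow> 'a) pmf \<Rightarrow> nat \<Rightarrow> (nat \<Rightarrow> 'a \<Rightarrow> 'a) measure" where
  "walk_filtration \<mu> n = vimage_algebra (space (walk_space \<mu>)) (\<lambda>\<omega>. restrict \<omega> {1..n})
      (PiM {1..n} (\<lambda>_. step_space \<mu>))"

definition mart_incr :: "'a::metric_space \<Rightarrow> (('a \<Rightarrow> real) \<Rightarrow> real) \<Rightarrow> real \<Rightarrow> nat \<Rightarrow> ('a \<Rightarrow> real)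
      \<Rightarrow> (nat \<Rightarrow> 'a \<Rightarrow> 'a) \<Rightarrow> real" where
  "mart_incr o' \<psi> ell n x \<omega> = sigma0 o' \<psi> (\<omega> n) (horo_act o' (walk (n - 1) \<omega>) x) - ell"

definition var_bound :: "'a::metric_space \<Rightarrow> (('a \<Rightarrow> real) \<Rightarrow> real) \<Rightarrow> real \<Rightarrow> ('a \<Rightarrow> 'a) pmf \<Rightarrow> real" where
  "var_bound o' \<psi> ell \<mu> = (SUP \<xi>\<in>horo_cpt o'. measure_pmf.expectation \<mu> (\<lambda>g. (sigma0 o' \<psi> g \<xi> - ell)\<^sup>2))"

end

theory Submission
  imports Defs
begin

lemma isometry_inv: "isometry g \<Longrightarrow> isometry (inv g)"
  unfolding isometry_def
proof safe
  assume b: "bij g" and d: "\<forall>x y. dist (g x) (g y) = dist x y"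
  show "bij (inv g)" using b by (simp add: bij_imp_bij_inv)
  fix x y
  have "dist (inv g x) (inv g y) = dist (g (inv g x)) (g (inv g y))" using d by simp
  also have "\<dots> = dist x y" using b by (simp add: bij_is_surj surj_f_inv_f)
  finally show "dist (inv g x) (inv g y) = dist x y" .
qed

lemma isometry_comp: "isometry g \<Longrightarrow> isometry h \<Longrightarrow> isometry (g \<circ> h)"
  unfolding isometry_def by (auto intro: bij_comp)

lemma isometry_id: "isometry id"
  unfolding isometry_def by auto

lemma horo_cpt_bound:
  fixes o' :: "'a::metric_space"
  assumes "h \<in> horo_cpt o'"
  shows "\<bar>h m\<bar> \<le> dist m o'"
proof -
  have cl: "closed {h::'a\<Rightarrow>real. \<forall>m. \<bar>h m\<bar> \<le> dist m o'}"
    by (intro closed_Collect_all closed_Collect_le continuous_on_rabs continuous_on_product_coordinates continuous_on_const)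
  have "range (\<lambda>x m. dist x m - dist x o') \<subseteq> {h::'a\<Rightarrow>real. \<forall>m. \<bar>h m\<bar> \<le> dist m o'}"
  proof safe
    fix x m
    show "\<bar>dist x m - dist x o'\<bar> \<le> dist m o'"
      by (metis abs_dist_diff_le dist_commute)
  qed
  then have "horo_cpt o' \<subseteq> {h::'a\<Rightarrow>real. \<forall>m. \<bar>h m\<bar> \<le> dist m o'}"
    unfolding horo_cpt_def using cl by (rule closure_minimal)
  then show ?thesis using assms by auto
qed

lemma horo_act_cpt:
  fixes o' :: "'a::metric_space"
  assumes g: "isometry g" and h: "h \<in> horo_cpt o'"
  shows "horo_act o' g h \<in> horo_cpt o'"
proof -
  have cont: "continuous_on UNIV (horo_act o' g)"
    unfolding horo_act_def
    by (intro continuous_on_coordinatewise_then_product continuous_on_diff continuous_on_product_coordinates)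
  have ig: "isometry (inv g)" using g by (rule isometry_inv)
  have "horo_act o' g ` range (\<lambda>x m. dist x m - dist x o') \<subseteq> range (\<lambda>x m. dist x m - dist x o')"
  proof safe
    fix z
    have e: "dist z (inv g m) = dist (g z) m" for m
    proof -
      have "dist z (inv g m) = dist (inv g (g z)) (inv g m)"
        using g unfolding isometry_def by (simp add: bij_is_inj)
      also have "\<dots> = dist (g z) m" using ig unfolding isometry_def by simp
      finally show ?thesis .
    qed
    have "horo_act o' g (\<lambda>m. dist z m - dist z o') = (\<lambda>m. dist (g z) m - dist (g z) o')"
      unfolding horo_act_def by (simp add: e)
    then show "horo_act o' g (\<lambda>m. dist z m - dist z o') \<in> range (\<lambda>x m. dist x m - dist x o')"
      by auto
  qed
  then have "horo_act o' g ` closure (range (\<lambda>x m. dist x m - dist x o')) \<subseteq> closure (range (\<lambda>x m. dist x m - dist x o'))"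
    by (intro image_closure_subset continuous_on_subset[OF cont]) (use closure_subset in blast)+
  then show ?thesis using h unfolding horo_cpt_def by auto
qed

lemma busemann_bound:
  fixes o' :: "'a::metric_space"
  assumes g: "isometry g" and h: "h \<in> horo_cpt o'"
  shows "\<bar>busemann o' g h\<bar> \<le> dist (g o') o'"
proof -
  have "\<bar>busemann o' g h\<bar> \<le> dist (inv g o') o'"
    unfolding busemann_def using horo_cpt_bound[OF h] .
  also have "dist (inv g o') o' = dist (g (inv g o')) (g o')"
    using g unfolding isometry_def by simp
  also have "\<dots> = dist o' (g o')" using g unfolding isometry_def by (simp add: bij_is_surj surj_f_inv_f)
  finally show ?thesis by (simp add: dist_commute)
qed


lemma space_step: "space (step_space \<mu>) = set_pmf \<mu>"
  unfolding step_space_def by (simp add: space_restrict_space)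

lemma sets_step: "sets (step_space \<mu>) = sets (count_space (set_pmf \<mu>))"
  unfolding step_space_def by (auto simp: sets_restrict_space)

lemma prob_step: "prob_space (step_space \<mu>)"
  unfolding step_space_def
  by (intro prob_space_restrict_space measure_pmf.emeasure_eq_1_AE) (auto simp: AE_measure_pmf)

lemma pps: "product_prob_space (\<lambda>_. step_space \<mu>)"
  unfolding product_prob_space_def product_prob_space_axioms_def product_sigma_finite_def
  using prob_step by (auto simp: prob_space_imp_sigma_finite)

lemma meas_step: "f \<in> measurable (step_space \<mu>) N \<longleftrightarrow> f \<in> set_pmf \<mu> \<rightarrow> space N"
  by (subst measurable_cong_sets[OF sets_step refl]) auto

lemma walk_cong: "(\<And>i. 1 \<le> i \<Longrightarrow> i \<le> k \<Longrightarrow> \<omega> i = \<omega>' i) \<Longrightarrow> walk k \<omega> = walk k \<omega>'"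
  by (induction k) auto

lemma walk_meas:
  assumes "{1..k} \<subseteq> I"
  shows "(\<lambda>\<omega>. \<Phi> (walk k \<omega>) :: real) \<in> borel_measurable (PiM I (\<lambda>_. step_space \<mu>))"
  using assms
proof (induction k arbitrary: \<Phi>)
  case 0
  then show ?case by simp
next
  case (Suc k)
  have sub: "{1..k} \<subseteq> I" using Suc.prems by auto
  have comp: "(\<lambda>\<omega>. \<omega> (Suc k)) \<in> measurable (PiM I (\<lambda>_. step_space \<mu>)) (count_space (set_pmf \<mu>))"
  proof -
    have "Suc k \<in> I" using Suc.prems by auto
    then show ?thesis
    using measurable_component_singleton[of "Suc k" I "\<lambda>_. step_space \<mu>"]
    by (subst measurable_cong_sets[OF refl sets_step[symmetric]]) auto
  qed
  have "(\<lambda>\<omega>. (\<lambda>g \<omega>. \<Phi> (g \<circ> walk k \<omega>)) (\<omega> (Suc k)) \<omega>) \<in> borel_measurable (PiM I (\<lambda>_. step_space \<mu>))"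
    by (rule measurable_compose_countable'[OF Suc.IH[OF sub] comp]) auto
  then show ?case by (simp only: walk.simps)
qed

lemma walk_meas2:
  assumes "{1..k} \<subseteq> I" "n \<in> I"
  shows "(\<lambda>\<omega>. \<Psi> (\<omega> n) (walk k \<omega>) :: real) \<in> borel_measurable (PiM I (\<lambda>_. step_space \<mu>))"
proof -
  have comp: "(\<lambda>\<omega>. \<omega> n) \<in> measurable (PiM I (\<lambda>_. step_space \<mu>)) (count_space (set_pmf \<mu>))"
    using measurable_component_singleton[of n I "\<lambda>_. step_space \<mu>"] assms
    by (subst measurable_cong_sets[OF refl sets_step[symmetric]]) auto
  show ?thesis
    by (rule measurable_compose_countable'[OF walk_meas[OF assms(1)] comp]) auto
qed

lemma walk_isometry:
  assumes "set_pmf \<mu> \<subseteq> {g. isometry g}" "\<And>i. 1 \<le> i \<Longrightarrow> i \<le> k \<Longrightarrow> \<omega> i \<in> set_pmf \<mu>"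
  shows "isometry (walk k \<omega>)"
  using assms(2)
proof (induction k)
  case 0 then show ?case using isometry_id by (simp add: id_def)
next
  case (Suc k)
  then show ?case using assms(1) unfolding walk.simps by (intro isometry_comp) auto
qed


lemma cube_le_exp:
  fixes z :: real assumes "0 \<le> z" shows "z^3 \<le> 27 * exp z"
proof -
  have "z/3 \<le> exp (z/3)" using exp_ge_add_one_self[of "z/3"] by linarith
  then have "(z/3)^3 \<le> exp (z/3)^3" using assms by (intro power_mono) auto
  also have "exp (z/3)^3 = exp z" by (subst exp_of_nat_mult[symmetric]) simp
  finally show ?thesis by (simp add: power_divide)
qed

lemma taylor_bound:
  fixes lam Y K \<alpha> :: real
  assumes a: "\<alpha> > 0" and Y: "\<bar>Y\<bar> \<le> K" and l: "\<bar>lam\<bar> \<le> \<alpha>/2"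
  shows "exp (lam*Y) \<le> 1 + lam*Y + lam^2*Y^2/2 + \<bar>lam\<bar>^3 * (36/\<alpha>^3) * exp (\<alpha>*K)"
proof -
  define t where "t = lam*Y"
  obtain s where s: "\<bar>s\<bar> \<le> \<bar>t\<bar>" and e: "exp t = (\<Sum>m<3. t^m / fact m) + exp s / fact 3 * t^3"
    using Maclaurin_exp_le[of t 3] by blast
  have e2: "exp t = 1 + t + t^2/2 + exp s / 6 * t^3"
    using e by (simp add: eval_nat_numeral fact_numeral)
  have K0: "0 \<le> K" using Y by linarith
  have tK: "\<bar>t\<bar> \<le> \<bar>lam\<bar> * K" unfolding t_def abs_mult by (intro mult_left_mono Y) auto
  have tK2: "\<bar>lam\<bar> * K \<le> \<alpha>/2 * K" using l K0 by (intro mult_right_mono) auto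
  have "exp s * t^3 \<le> exp \<bar>t\<bar> * \<bar>t\<bar>^3"
  proof -
    have "t^3 \<le> \<bar>t\<bar>^3" by (metis abs_ge_self abs_power_minus power_abs power_mono abs_ge_zero order.trans
          abs_le_self_iff)
    hence "exp s * t^3 \<le> exp s * \<bar>t\<bar>^3" by simp
    also have "\<dots> \<le> exp \<bar>t\<bar> * \<bar>t\<bar>^3" using s by (intro mult_right_mono) auto
    finally show ?thesis .
  qed
  also have "\<dots> \<le> exp (\<alpha>/2*K) * (\<bar>lam\<bar>^3 * K^3)"
  proof (intro mult_mono)
    show "exp \<bar>t\<bar> \<le> exp (\<alpha> / 2 * K)" using tK tK2 by simp
    have "\<bar>t\<bar>^3 \<le> (\<bar>lam\<bar> * K)^3" using tK by (intro power_mono) auto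
    then show "\<bar>t\<bar>^3 \<le> \<bar>lam\<bar>^3 * K^3" by (simp add: power_mult_distrib)
  qed (use K0 in auto)
  also have "K^3 \<le> 216/\<alpha>^3 * exp (\<alpha>/2*K)"
  proof -
    have "(\<alpha>/2*K)^3 \<le> 27 * exp (\<alpha>/2*K)" using a K0 by (intro cube_le_exp) auto
    then have "\<alpha>^3 * K^3 / 8 \<le> 27 * exp (\<alpha>/2*K)" by (simp add: power_mult_distrib power_divide)
    then show ?thesis using a by (simp add: field_simps)
  qed
  hence "exp (\<alpha>/2*K) * (\<bar>lam\<bar>^3 * K^3) \<le> exp (\<alpha>/2*K) * (\<bar>lam\<bar>^3 * (216/\<alpha>^3 * exp (\<alpha>/2*K)))"
    by (intro mult_left_mono) auto
  also have "\<dots> = \<bar>lam\<bar>^3 * (216/\<alpha>^3) * (exp (\<alpha>/2*K) * exp (\<alpha>/2*K))" by simp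
  also have "exp (\<alpha>/2*K) * exp (\<alpha>/2*K) = exp (\<alpha>*K)" by (simp flip: exp_add)
  finally have est: "exp s * t^3 \<le> \<bar>lam\<bar>^3 * (216/\<alpha>^3) * exp (\<alpha>*K)" .
  then have "exp t \<le> 1 + t + t^2/2 + \<bar>lam\<bar>^3 * (36/\<alpha>^3) * exp (\<alpha>*K)"
  proof -
    have h: "exp s * t^3 / 6 \<le> \<bar>lam\<bar>^3 * (216/\<alpha>^3) * exp (\<alpha>*K) / 6"
      using est by (rule divide_right_mono) auto
    have "\<bar>lam\<bar>^3 * (216/\<alpha>^3) * exp (\<alpha>*K) / 6 = \<bar>lam\<bar>^3 * (36/\<alpha>^3) * exp (\<alpha>*K)" by simp
    moreover have "exp s / 6 * t^3 = exp s * t^3 / 6" by simp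
    ultimately have "exp s / 6 * t^3 \<le> \<bar>lam\<bar>^3 * (36/\<alpha>^3) * exp (\<alpha>*K)" using h by metis
    then show ?thesis unfolding e2 by (rule add_left_mono)
  qed
  then show ?thesis unfolding t_def by (simp add: power_mult_distrib)
qed


lemma one_step_bound:
  fixes o' :: "'a::metric_space"
  assumes iso: "set_pmf \<mu> \<subseteq> {g. isometry g}"
    and fem: "finite_exp_moment o' \<mu>"
    and bnd: "bounded (\<psi> ` horo_cpt o')"
    and mean: "\<forall>x\<in>horo_cpt o'. measure_pmf.expectation \<mu> (\<lambda>g. sigma0 o' \<psi> g x) = ell"
    and eps: "\<epsilon> > 0"
  shows "\<exists>b>0. \<forall>lam. \<bar>lam\<bar> < b \<longrightarrow> (\<forall>y\<in>horo_cpt o'.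
     (\<integral>\<^sup>+g. ennreal (exp (lam * (sigma0 o' \<psi> g y - ell))) \<partial>step_space \<mu>)
        \<le> ennreal (exp (lam\<^sup>2 * (var_bound o' \<psi> ell \<mu> + \<epsilon>) / 2)))"
proof -
  obtain \<alpha> where a: "\<alpha> > 0" and ia: "integrable (measure_pmf \<mu>) (\<lambda>g. exp (\<alpha> * dist (g o') o'))"
    using fem unfolding finite_exp_moment_def by blast
  obtain B0 where B0: "\<forall>h\<in>horo_cpt o'. norm (\<psi> h) \<le> B0"
    using bnd unfolding bounded_iff by auto
  define B where "B = max B0 0"
  have B: "\<bar>\<psi> h\<bar> \<le> B" if "h \<in> horo_cpt o'" for h using B0 that unfolding B_def by force
  define K where "K g = dist (g o') o' + (2*B + \<bar>ell\<bar>)" for g :: "'a \<Rightarrow> 'a"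
  have K0: "0 \<le> K g" for g unfolding K_def B_def by auto
  have Ybnd: "\<bar>sigma0 o' \<psi> g y - ell\<bar> \<le> K g" if "g \<in> set_pmf \<mu>" "y \<in> horo_cpt o'" for g y
  proof -
    have ig: "isometry g" using iso that by auto
    have "\<bar>busemann o' g y\<bar> \<le> dist (g o') o'" by (rule busemann_bound[OF ig that(2)])
    moreover have "\<bar>\<psi> (horo_act o' g y)\<bar> \<le> B" by (rule B[OF horo_act_cpt[OF ig that(2)]])
    moreover have "\<bar>\<psi> y\<bar> \<le> B" by (rule B[OF that(2)])
    ultimately show ?thesis unfolding sigma0_def K_def by linarith
  qed
  define E where "E g = exp (\<alpha> * K g)" for g
  have iE: "integrable (measure_pmf \<mu>) E"
  proof -
    have "E = (\<lambda>g. exp (\<alpha> * (2*B + \<bar>ell\<bar>)) * exp (\<alpha> * dist (g o') o'))"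
      unfolding E_def K_def by (auto simp: distrib_left simp flip: exp_add)
    then show ?thesis using ia by simp
  qed
  define E0 where "E0 = measure_pmf.expectation \<mu> E"
  have E0pos: "0 \<le> E0" unfolding E0_def E_def by simp
  have KE: "K g \<le> E g / \<alpha>" for g
  proof -
    have "\<alpha> * K g \<le> exp (\<alpha> * K g)" using exp_ge_add_one_self[of "\<alpha> * K g"] by linarith
    then show ?thesis unfolding E_def using a by (simp add: field_simps)
  qed
  have K2E: "(K g)^2 \<le> 4/\<alpha>^2 * E g" for g
  proof -
    have "\<alpha>/2 * K g \<le> exp (\<alpha>/2 * K g)" using exp_ge_add_one_self[of "\<alpha>/2 * K g"] by linarith
    then have "(\<alpha>/2 * K g)^2 \<le> exp (\<alpha>/2 * K g)^2" using a K0[of g] by (intro power_mono) auto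
    also have "exp (\<alpha>/2 * K g)^2 = E g" unfolding E_def by (simp add: power2_eq_square flip: exp_add)
    finally show ?thesis using a by (simp add: field_simps power_mult_distrib power_divide)
  qed
  define Y where "Y y g = sigma0 o' \<psi> g y - ell" for y g
  have iY: "integrable (measure_pmf \<mu>) (Y y)" if "y \<in> horo_cpt o'" for y
  proof (rule Bochner_Integration.integrable_bound[where f="\<lambda>g. E g / \<alpha>"])
    show "integrable (measure_pmf \<mu>) (\<lambda>g. E g / \<alpha>)" using iE by simp
    show "AE x in measure_pmf \<mu>. norm (Y y x) \<le> norm (E x / \<alpha>)"
      unfolding AE_measure_pmf_iff
    proof
      fix g assume "g \<in> set_pmf \<mu>"
      then have "\<bar>Y y g\<bar> \<le> E g / \<alpha>" using Ybnd[of g y] KE[of g] that unfolding Y_def by linarith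
      then show "norm (Y y g) \<le> norm (E g / \<alpha>)" using a unfolding E_def by auto
    qed
  qed simp
  have iY2: "integrable (measure_pmf \<mu>) (\<lambda>g. (Y y g)^2)" if "y \<in> horo_cpt o'" for y
  proof (rule Bochner_Integration.integrable_bound[where f="\<lambda>g. 4/\<alpha>^2 * E g"])
    show "integrable (measure_pmf \<mu>) (\<lambda>g. 4/\<alpha>^2 * E g)" using iE by simp
    show "AE x in measure_pmf \<mu>. norm ((Y y x)^2) \<le> norm (4/\<alpha>^2 * E x)"
      unfolding AE_measure_pmf_iff
    proof
      fix g assume g: "g \<in> set_pmf \<mu>"
      have "(Y y g)^2 \<le> (K g)^2" using Ybnd[OF g that] unfolding Y_def
        by (metis abs_le_square_iff abs_of_nonneg K0)
      then have "(Y y g)^2 \<le> 4/\<alpha>^2 * E g" using K2E[of g] by linarith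
      then show "norm ((Y y g)^2) \<le> norm (4/\<alpha>^2 * E g)" unfolding E_def by auto
    qed
  qed simp
  have EY2: "measure_pmf.expectation \<mu> (\<lambda>g. (Y y g)^2) \<le> 4/\<alpha>^2 * E0" if "y \<in> horo_cpt o'" for y
  proof -
    have "measure_pmf.expectation \<mu> (\<lambda>g. (Y y g)^2) \<le> measure_pmf.expectation \<mu> (\<lambda>g. 4/\<alpha>^2 * E g)"
    proof (rule integral_mono_AE[OF iY2[OF that]])
      show "integrable (measure_pmf \<mu>) (\<lambda>g. 4/\<alpha>^2 * E g)" using iE by simp
      show "AE g in measure_pmf \<mu>. (Y y g)^2 \<le> 4/\<alpha>^2 * E g"
        unfolding AE_measure_pmf_iff
      proof
        fix g assume g: "g \<in> set_pmf \<mu>"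
        have "(Y y g)^2 \<le> (K g)^2" using Ybnd[OF g that] unfolding Y_def
          by (metis abs_le_square_iff abs_of_nonneg K0)
        then show "(Y y g)^2 \<le> 4/\<alpha>^2 * E g" using K2E[of g] by linarith
      qed
    qed
    then show ?thesis unfolding E0_def by simp
  qed
  have v: "measure_pmf.expectation \<mu> (\<lambda>g. (Y y g)^2) \<le> var_bound o' \<psi> ell \<mu>" if "y \<in> horo_cpt o'" for y
    unfolding var_bound_def Y_def
  proof (rule cSUP_upper[OF that])
    show "bdd_above ((\<lambda>\<xi>. measure_pmf.expectation \<mu> (\<lambda>g. (sigma0 o' \<psi> g \<xi> - ell)\<^sup>2)) ` horo_cpt o')"
      using EY2 unfolding Y_def by (intro bdd_aboveI2) auto
  qed
  have EY: "measure_pmf.expectation \<mu> (Y y) = 0" if "y \<in> horo_cpt o'" for y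
  proof -
    have i1: "integrable (measure_pmf \<mu>) (\<lambda>g. sigma0 o' \<psi> g y)"
    proof -
      have "integrable (measure_pmf \<mu>) (\<lambda>g. Y y g + ell)" using iY[OF that] by simp
      then show ?thesis unfolding Y_def by simp
    qed
    have "measure_pmf.expectation \<mu> (Y y) = measure_pmf.expectation \<mu> (\<lambda>g. sigma0 o' \<psi> g y) - ell"
      unfolding Y_def using i1 by (subst Bochner_Integration.integral_diff) auto
    then show ?thesis using mean that by simp
  qed
  define D where "D = 36/\<alpha>^3 * E0"
  have D0: "0 \<le> D" unfolding D_def using a E0pos by simp
  define b where "b = min (\<alpha>/2) (\<epsilon> / (2*D+2))"
  have b0: "b > 0" unfolding b_def using a eps D0 by auto
  show ?thesis
  proof (intro exI[of _ b] conjI allI impI ballI b0)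
    fix lam y assume lb: "\<bar>lam\<bar> < b" and y: "y \<in> horo_cpt o'"
    define R where "R g = 1 + lam * Y y g + lam^2 * (Y y g)^2 / 2 + \<bar>lam\<bar>^3 * (36/\<alpha>^3) * E g" for g
    have la: "\<bar>lam\<bar> \<le> \<alpha>/2" using lb unfolding b_def by auto
    have pt: "exp (lam * Y y g) \<le> R g" if "g \<in> set_pmf \<mu>" for g
      unfolding R_def E_def using taylor_bound[OF a Ybnd[OF that y, folded Y_def] la] .
    have iR: "integrable (measure_pmf \<mu>) R"
      unfolding R_def using iY[OF y] iY2[OF y] iE by simp
    have intR: "measure_pmf.expectation \<mu> R = 1 + lam * 0 + lam^2 / 2 * measure_pmf.expectation \<mu> (\<lambda>g. (Y y g)^2) + \<bar>lam\<bar>^3 * D"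
    proof -
      have "measure_pmf.expectation \<mu> R = measure_pmf.expectation \<mu> (\<lambda>g. 1 + lam * Y y g + lam^2 / 2 * (Y y g)^2)
          + measure_pmf.expectation \<mu> (\<lambda>g. \<bar>lam\<bar>^3 * (36/\<alpha>^3) * E g)"
        unfolding R_def using iY[OF y] iY2[OF y] iE
        by (subst Bochner_Integration.integral_add[symmetric]) (auto simp: algebra_simps)
      also have "measure_pmf.expectation \<mu> (\<lambda>g. 1 + lam * Y y g + lam^2 / 2 * (Y y g)^2)
          = measure_pmf.expectation \<mu> (\<lambda>g. 1 + lam * Y y g) + measure_pmf.expectation \<mu> (\<lambda>g. lam^2 / 2 * (Y y g)^2)"
        using iY[OF y] iY2[OF y] by (subst Bochner_Integration.integral_add) auto
      also have "measure_pmf.expectation \<mu> (\<lambda>g. 1 + lam * Y y g) = 1 + lam * measure_pmf.expectation \<mu> (Y y)"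
        using iY[OF y] by (subst Bochner_Integration.integral_add) auto
      finally show ?thesis using EY[OF y] unfolding D_def E0_def by simp
    qed
    have small: "\<bar>lam\<bar>^3 * D \<le> lam^2 * \<epsilon> / 2"
    proof -
      have "\<bar>lam\<bar> * (2*D+2) \<le> \<epsilon>" using lb D0 unfolding b_def by (auto simp: field_simps)
      then have "\<bar>lam\<bar> * D \<le> \<epsilon> / 2" using D0 by (simp add: algebra_simps)
      then have "lam^2 * (\<bar>lam\<bar> * D) \<le> lam^2 * (\<epsilon> / 2)" by (intro mult_left_mono) auto
      then show ?thesis by (simp add: power2_eq_square power3_eq_cube abs_mult_self_eq mult.assoc)
    qed
    have "measure_pmf.expectation \<mu> R \<le> 1 + lam^2 * (var_bound o' \<psi> ell \<mu> + \<epsilon>) / 2"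
    proof -
      have "lam^2 / 2 * measure_pmf.expectation \<mu> (\<lambda>g. (Y y g)^2) \<le> lam^2 / 2 * var_bound o' \<psi> ell \<mu>"
        using v[OF y] by (intro mult_left_mono) auto
      then show ?thesis unfolding intR using small by (simp add: field_simps)
    qed
    also have "\<dots> \<le> exp (lam^2 * (var_bound o' \<psi> ell \<mu> + \<epsilon>) / 2)" by (rule exp_ge_add_one_self[simplified add.commute])
    finally have Rle: "measure_pmf.expectation \<mu> R \<le> exp (lam^2 * (var_bound o' \<psi> ell \<mu> + \<epsilon>) / 2)" .
    have "(\<integral>\<^sup>+g. ennreal (exp (lam * (sigma0 o' \<psi> g y - ell))) \<partial>step_space \<mu>)
        = (\<integral>\<^sup>+g. ennreal (exp (lam * Y y g)) * indicator (set_pmf \<mu>) g \<partial>measure_pmf \<mu>)"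
      unfolding step_space_def Y_def by (subst nn_integral_restrict_space) auto
    also have "\<dots> \<le> (\<integral>\<^sup>+g. ennreal (R g) \<partial>measure_pmf \<mu>)"
      by (intro nn_integral_mono) (auto simp: indicator_def intro!: ennreal_leI pt)
    also have "\<dots> = ennreal (measure_pmf.expectation \<mu> R)"
    proof (rule nn_integral_eq_integral[OF iR])
      show "AE x in measure_pmf \<mu>. 0 \<le> R x" unfolding AE_measure_pmf_iff
        using pt by (meson exp_ge_zero order_trans)
    qed
    also have "\<dots> \<le> ennreal (exp (lam\<^sup>2 * (var_bound o' \<psi> ell \<mu> + \<epsilon>) / 2))"
      using Rle by (rule ennreal_leI)
    finally show "(\<integral>\<^sup>+g. ennreal (exp (lam * (sigma0 o' \<psi> g y - ell))) \<partial>step_space \<mu>)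
        \<le> ennreal (exp (lam\<^sup>2 * (var_bound o' \<psi> ell \<mu> + \<epsilon>) / 2))" .
  qed
qed


theorem lemma4p5:
  fixes o' :: "'a::metric_space"
    and \<mu> :: "('a \<Rightarrow> 'a) pmf"
    and \<psi> :: "('a \<Rightarrow> real) \<Rightarrow> real"
    and ell :: real
  assumes "separable_space TYPE('a)"
    and "geodesic_space TYPE('a)"
    and "gromov_hyperbolic o'"
    and "set_pmf \<mu> \<subseteq> {g. isometry g}"
    and "non_elementary o' \<mu>"
    and "finite_exp_moment o' \<mu>"
    and "AE \<omega> in walk_space \<mu>. (\<lambda>n. dist (walk n \<omega> o') o' / real n) \<longlonglongrightarrow> ell"
    and "bounded (\<psi> ` horo_cpt o')"
    and "\<psi> \<in> borel_measurable (restrict_space borel (horo_cpt o'))"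
    and "\<forall>x\<in>horo_cpt o'. measure_pmf.expectation \<mu> (\<lambda>g. sigma0 o' \<psi> g x) = ell"
  shows "\<forall>\<epsilon>>0. \<exists>b>0. \<forall>lam. \<bar>lam\<bar> < b \<longrightarrow> (\<forall>n\<ge>1. \<forall>x\<in>horo_cpt o'.
      AE \<omega> in walk_space \<mu>.
        real_cond_exp (walk_space \<mu>) (walk_filtration \<mu> (n - 1))
          (\<lambda>\<omega>. exp (lam * mart_incr o' \<psi> ell n x \<omega>)) \<omega>
        \<le> exp (lam\<^sup>2 * (var_bound o' \<psi> ell \<mu> + \<epsilon>) / 2))"
proof (intro allI impI)
  fix \<epsilon> :: real assume eps: "\<epsilon> > 0"
  note iso = assms(4)
  obtain b where b0: "b > 0" and bb: "\<forall>lam. \<bar>lam\<bar> < b \<longrightarrow> (\<forall>y\<in>horo_cpt o'.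
     (\<integral>\<^sup>+g. ennreal (exp (lam * (sigma0 o' \<psi> g y - ell))) \<partial>step_space \<mu>)
        \<le> ennreal (exp (lam\<^sup>2 * (var_bound o' \<psi> ell \<mu> + \<epsilon>) / 2)))"
    using one_step_bound[OF assms(4) assms(6) assms(8) assms(10) eps] by blast
  show "\<exists>b>0. \<forall>lam. \<bar>lam\<bar> < b \<longrightarrow> (\<forall>n\<ge>1. \<forall>x\<in>horo_cpt o'.
      AE \<omega> in walk_space \<mu>.
        real_cond_exp (walk_space \<mu>) (walk_filtration \<mu> (n - 1))
          (\<lambda>\<omega>. exp (lam * mart_incr o' \<psi> ell n x \<omega>)) \<omega>
        \<le> exp (lam\<^sup>2 * (var_bound o' \<psi> ell \<mu> + \<epsilon>) / 2))"
  proof (intro exI[of _ b] conjI allI impI ballI b0)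
    fix lam :: real and n :: nat and x assume lam: "\<bar>lam\<bar> < b" and n: "1 \<le> n" and x: "x \<in> horo_cpt o'"
    define S where "S = step_space \<mu>"
    define M where "M = walk_space \<mu>"
    define F where "F = walk_filtration \<mu> (n - 1)"
    define c where "c = exp (lam\<^sup>2 * (var_bound o' \<psi> ell \<mu> + \<epsilon>) / 2)"
    define \<Psi> where "\<Psi> = (\<lambda>g w. exp (lam * (sigma0 o' \<psi> g (horo_act o' w x) - ell)))"
    define f where "f = (\<lambda>\<omega>. exp (lam * mart_incr o' \<psi> ell n x \<omega>))"
    define J where "J = {1..n-1}"
    define K where "K = {1..n}"
    interpret P: product_prob_space "\<lambda>_. S" UNIV unfolding S_def by (rule pps)
    have MP: "M = PiM UNIV (\<lambda>_. S)" unfolding M_def S_def walk_space_def ..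
    have f_eq: "f = (\<lambda>\<omega>. \<Psi> (\<omega> n) (walk (n-1) \<omega>))"
      unfolding f_def \<Psi>_def mart_incr_def ..
    have fmeas: "f \<in> borel_measurable M"
      unfolding f_eq MP S_def by (rule walk_meas2) auto
    have JK: "J \<subseteq> K" and nK: "n \<in> K" and nJ: "n \<notin> J" and KJ: "K = insert n J" and fJ: "finite J"
      using n unfolding J_def K_def by auto
    have resJ: "(\<lambda>\<omega>. restrict \<omega> J) \<in> measurable M (PiM J (\<lambda>_. S))"
      unfolding MP by (rule measurable_restrict_subset) auto
    have resK: "(\<lambda>\<omega>. restrict \<omega> K) \<in> measurable M (PiM K (\<lambda>_. S))"
      unfolding MP by (rule measurable_restrict_subset) auto
    have setsF: "sets F = {(\<lambda>\<omega>. restrict \<omega> J) -` B \<inter> space M | B. B \<in> sets (PiM J (\<lambda>_. S))}"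
      unfolding F_def walk_filtration_def J_def[symmetric] M_def[symmetric] S_def[symmetric]
      by (rule sets_vimage_algebra2) (use measurable_space[OF resJ] in auto)
    have spF: "space F = space M"
      unfolding F_def walk_filtration_def M_def by simp
    have key: "(\<integral>\<^sup>+\<omega>. ennreal (f \<omega>) * indicator A \<omega> \<partial>M) \<le> ennreal c * emeasure M A" if A: "A \<in> sets F" for A
    proof -
      obtain B where B: "B \<in> sets (PiM J (\<lambda>_. S))" and AB: "A = (\<lambda>\<omega>. restrict \<omega> J) -` B \<inter> space M"
        using A unfolding setsF by auto
      define G where "G = (\<lambda>r. ennreal (\<Psi> (r n) (walk (n-1) r)) * indicator B (restrict r J))"
      have Gmeas: "G \<in> borel_measurable (PiM K (\<lambda>_. S))"
      proof -
        have "(\<lambda>r. \<Psi> (r n) (walk (n-1) r)) \<in> borel_measurable (PiM K (\<lambda>_. S))"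
          unfolding S_def by (rule walk_meas2) (use n in \<open>auto simp: K_def\<close>)
        moreover have "(\<lambda>r. indicator B (restrict r J) :: ennreal) \<in> borel_measurable (PiM K (\<lambda>_. S))"
          by (rule measurable_compose[OF measurable_restrict_subset[OF JK] borel_measurable_indicator[OF B]])
        ultimately show ?thesis unfolding G_def by measurable
      qed
      have "(\<integral>\<^sup>+\<omega>. ennreal (f \<omega>) * indicator A \<omega> \<partial>M) = (\<integral>\<^sup>+\<omega>. G (restrict \<omega> K) \<partial>M)"
      proof (rule nn_integral_cong)
        fix \<omega> assume \<omega>: "\<omega> \<in> space M"
        have w: "walk (n-1) (restrict \<omega> K) = walk (n-1) \<omega>"
          by (rule walk_cong) (auto simp: K_def)
        have r: "restrict (restrict \<omega> K) J = restrict \<omega> J" using JK by (simp add: Int_absorb1)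
        show "ennreal (f \<omega>) * indicator A \<omega> = G (restrict \<omega> K)"
          unfolding G_def f_eq w r using \<omega> nK by (auto simp: AB indicator_def)
      qed
      also have "\<dots> = (\<integral>\<^sup>+r. G r \<partial>distr M (PiM K (\<lambda>_. S)) (\<lambda>\<omega>. restrict \<omega> K))"
        by (rule nn_integral_distr[symmetric, OF resK]) (simp add: Gmeas)
      also have "distr M (PiM K (\<lambda>_. S)) (\<lambda>\<omega>. restrict \<omega> K) = PiM K (\<lambda>_. S)"
        unfolding MP by (rule P.distr_PiM_restrict_finite) (auto simp: K_def)
      also have "(\<integral>\<^sup>+r. G r \<partial>PiM K (\<lambda>_. S)) = (\<integral>\<^sup>+r. (\<integral>\<^sup>+y. G (r(n := y)) \<partial>S) \<partial>PiM J (\<lambda>_. S))"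
        unfolding KJ by (rule P.product_nn_integral_insert[OF fJ nJ Gmeas[unfolded KJ]])
      also have "\<dots> \<le> (\<integral>\<^sup>+r. ennreal c * indicator B r \<partial>PiM J (\<lambda>_. S))"
      proof (rule nn_integral_mono)
        fix r assume r: "r \<in> space (PiM J (\<lambda>_. S))"
        have rext: "restrict (r(n := y)) J = r" for y
          using r nJ unfolding space_PiM PiE_def extensional_def by (auto simp: restrict_def fun_eq_iff)
        have w: "walk (n-1) (r(n := y)) = walk (n-1) r" for y
          by (rule walk_cong) (use n in auto)
        have isow: "isometry (walk (n-1) r)"
        proof (rule walk_isometry[OF iso])
          fix i assume "1 \<le> i" "i \<le> n - 1"
          then have "i \<in> J" unfolding J_def by auto
          then show "r i \<in> set_pmf \<mu>" using r unfolding space_PiM S_def space_step by auto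
        qed
        have y: "horo_act o' (walk (n-1) r) x \<in> horo_cpt o'" by (rule horo_act_cpt[OF isow x])
        have "(\<integral>\<^sup>+y. G (r(n := y)) \<partial>S) = (\<integral>\<^sup>+y. ennreal (\<Psi> y (walk (n-1) r)) * indicator B r \<partial>S)"
          unfolding G_def rext w by simp
        also have "\<dots> = (\<integral>\<^sup>+y. ennreal (\<Psi> y (walk (n-1) r)) \<partial>S) * indicator B r"
          by (rule nn_integral_multc) (simp add: S_def meas_step)
        also have "\<dots> \<le> ennreal c * indicator B r"
        proof (rule mult_right_mono)
          show "(\<integral>\<^sup>+y. ennreal (\<Psi> y (walk (n-1) r)) \<partial>S) \<le> ennreal c"
            using bb lam y unfolding \<Psi>_def S_def c_def by blast
        qed simp
        finally show "(\<integral>\<^sup>+y. G (r(n := y)) \<partial>S) \<le> ennreal c * indicator B r" .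
      qed
      also have "\<dots> = ennreal c * emeasure (PiM J (\<lambda>_. S)) B"
        by (rule nn_integral_cmult_indicator[OF B])
      also have "emeasure (PiM J (\<lambda>_. S)) B = emeasure M A"
      proof -
        have "PiM J (\<lambda>_. S) = distr M (PiM J (\<lambda>_. S)) (\<lambda>\<omega>. restrict \<omega> J)"
          unfolding MP by (rule P.distr_PiM_restrict_finite[symmetric]) (auto simp: fJ)
        then have "emeasure (PiM J (\<lambda>_. S)) B = emeasure (distr M (PiM J (\<lambda>_. S)) (\<lambda>\<omega>. restrict \<omega> J)) B"
          by simp
        also have "\<dots> = emeasure M A" unfolding AB by (rule emeasure_distr[OF resJ B])
        finally show ?thesis .
      qed
      finally show ?thesis .
    qed
    have subalg: "subalgebra M F"
      unfolding subalgebra_def spF using setsF measurable_sets[OF resJ] by auto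
    have fm: "finite_measure M" unfolding MP using P.prob_space_axioms prob_space_def by blast
    have "finite_measure_subalgebra M F"
      using fm subalg by (simp add: finite_measure_subalgebra_def finite_measure_subalgebra_axioms_def)
    then interpret Sg: sigma_finite_subalgebra M F by (rule finite_measure_subalgebra_is_sigma_finite)
    have pM: "prob_space M" unfolding MP using P.prob_space_axioms .
    have fpos: "0 \<le> f \<omega>" for \<omega> unfolding f_def by simp
    have intf: "integrable M f"
    proof (rule integrableI_nonneg[OF fmeas])
      show "AE x in M. 0 \<le> f x" using fpos by simp
      have "space M \<in> sets F" using spF sets.top by metis
      then have "(\<integral>\<^sup>+\<omega>. ennreal (f \<omega>) * indicator (space M) \<omega> \<partial>M) \<le> ennreal c * emeasure M (space M)"
        by (rule key)
      moreover have "(\<integral>\<^sup>+\<omega>. ennreal (f \<omega>) * indicator (space M) \<omega> \<partial>M) = (\<integral>\<^sup>+\<omega>. ennreal (f \<omega>) \<partial>M)"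
        by (rule nn_integral_cong) auto
      moreover have "emeasure M (space M) = 1" using pM by (rule prob_space.emeasure_space_1)
      ultimately show "(\<integral>\<^sup>+\<omega>. ennreal (f \<omega>) \<partial>M) < \<infinity>"
        by (simp add: ennreal_mult_less_top le_less_trans)
    qed
    define h where "h = real_cond_exp M F f"
    have hF: "h \<in> borel_measurable F" unfolding h_def by (rule borel_measurable_cond_exp)
    have hint: "integrable M h" unfolding h_def by (rule Sg.real_cond_exp_int(1)[OF intf])
    define A0 where "A0 = {\<omega> \<in> space M. c < h \<omega>}"
    have A0F: "A0 \<in> sets F"
    proof -
      have "{\<omega> \<in> space F. c < h \<omega>} \<in> sets F" using hF by measurable
      then show ?thesis unfolding A0_def spF .
    qed
    have A0M: "A0 \<in> sets M" using A0F subalg unfolding subalgebra_def by auto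
    have i1: "(\<integral>\<omega>. indicator A0 \<omega> * f \<omega> \<partial>M) = (\<integral>\<omega>. indicator A0 \<omega> * h \<omega> \<partial>M)"
      using Sg.real_cond_exp_intA[OF intf A0F] unfolding set_lebesgue_integral_def h_def by simp
    have i2: "(\<integral>\<omega>. indicator A0 \<omega> * f \<omega> \<partial>M) \<le> c * measure M A0"
    proof -
      have intAf: "integrable M (\<lambda>\<omega>. indicator A0 \<omega> * f \<omega>)"
        using integrable_mult_indicator[OF A0M intf] by simp
      have "ennreal (\<integral>\<omega>. indicator A0 \<omega> * f \<omega> \<partial>M) = (\<integral>\<^sup>+\<omega>. ennreal (indicator A0 \<omega> * f \<omega>) \<partial>M)"
        by (rule nn_integral_eq_integral[OF intAf, symmetric]) (simp add: fpos)
      also have "\<dots> = (\<integral>\<^sup>+\<omega>. ennreal (f \<omega>) * indicator A0 \<omega> \<partial>M)"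
        by (rule nn_integral_cong) (auto simp: indicator_def)
      also have "\<dots> \<le> ennreal c * emeasure M A0" by (rule key[OF A0F])
      also have "\<dots> = ennreal (c * measure M A0)"
        using fm by (simp add: finite_measure.emeasure_eq_measure ennreal_mult c_def)
      finally show ?thesis by (rule ennreal_le_iff[THEN iffD1, rotated]) (simp add: c_def)
    qed
    have intg: "integrable M (\<lambda>\<omega>. indicator A0 \<omega> * (h \<omega> - c))"
      using integrable_mult_indicator[OF A0M Bochner_Integration.integrable_diff[OF hint finite_measure.integrable_const[OF fm]]]
      by simp
    have "(\<integral>\<omega>. indicator A0 \<omega> * (h \<omega> - c) \<partial>M) = (\<integral>\<omega>. indicator A0 \<omega> * h \<omega> \<partial>M) - c * measure M A0"
    proof -
      have "(\<integral>\<omega>. indicator A0 \<omega> * (h \<omega> - c) \<partial>M) = (\<integral>\<omega>. indicator A0 \<omega> * h \<omega> - c * indicator A0 \<omega> \<partial>M)"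
        by (simp add: algebra_simps)
      also have "\<dots> = (\<integral>\<omega>. indicator A0 \<omega> * h \<omega> \<partial>M) - (\<integral>\<omega>. c * indicator A0 \<omega> \<partial>M)"
      proof (intro Bochner_Integration.integral_diff)
        show "integrable M (\<lambda>\<omega>. indicator A0 \<omega> * h \<omega>)" using integrable_mult_indicator[OF A0M hint] by simp
        have "integrable M (indicator A0 :: _ \<Rightarrow> real)"
          using A0M finite_measure.emeasure_finite[OF fm, of A0] by (intro integrable_real_indicator) (auto simp: top.not_eq_extremum)
        then show "integrable M (\<lambda>\<omega>. c * indicator A0 \<omega>)" by simp
      qed
      also have "(\<integral>\<omega>. c * indicator A0 \<omega> \<partial>M) = c * measure M A0" using A0M by simp
      finally show ?thesis .
    qed
    then have le0: "(\<integral>\<omega>. indicator A0 \<omega> * (h \<omega> - c) \<partial>M) \<le> 0" using i1 i2 by linarith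
    have nn: "AE \<omega> in M. 0 \<le> indicator A0 \<omega> * (h \<omega> - c)"
      by (auto simp: A0_def indicator_def)
    have "(\<integral>\<omega>. indicator A0 \<omega> * (h \<omega> - c) \<partial>M) = 0"
      using le0 integral_nonneg_AE[OF nn] by linarith
    then have "AE \<omega> in M. indicator A0 \<omega> * (h \<omega> - c) = 0"
      using integral_nonneg_eq_0_iff_AE[OF intg nn] by simp
    then have "AE \<omega> in M. h \<omega> \<le> c"
    proof (rule AE_mp[OF _ AE_I2])
      fix \<omega> assume "\<omega> \<in> space M"
      then show "indicator A0 \<omega> * (h \<omega> - c) = 0 \<longrightarrow> h \<omega> \<le> c"
        by (auto simp: A0_def indicator_def)
    qed
    then show "AE \<omega> in walk_space \<mu>.
        real_cond_exp (walk_space \<mu>) (walk_filtration \<mu> (n - 1))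
          (\<lambda>\<omega>. exp (lam * mart_incr o' \<psi> ell n x \<omega>)) \<omega>
        \<le> exp (lam\<^sup>2 * (var_bound o' \<psi> ell \<mu> + \<epsilon>) / 2)"
      unfolding h_def M_def F_def f_def c_def .
  qed
qed

end
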